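(* Let $X$ be a $\mathbb{Z}^n$-periodic discrete metric space with orbit representatives $x_1,\dots,x_N$, let $p\in[1,\infty]$, and let $A$ be a band operator on $l^p(X)$. Then $UAU^{-1}$ is a band operator on $l^p(\mathbb{Z}^n,\mathbb{C}^N)$, i.e. it can be written as $\sum_{|\alpha|\le m} a_\alpha V_\alpha$ for some $m$ and some $a_\alpha\in l^\infty(\mathbb{Z}^n,\mathbb{C}^{N\times N})$.
   Context: A discrete metric space is a countable set $X$ with a metric $\rho$ such that every ball $\{x:\rho(x,x_0)\le r\}$ is finite. It is $\mathbb{Z}^n$-periodic if $\mathbb{Z}^n$ acts on $X$, $(\alpha,x)\mapsto\alpha\cdot x$, with $0\cdot x=x$, $(\alpha+\beta)\cdot x=\alpha\cdot(\beta\cdot x)$, $\rho(\alpha\cdot x,\alpha\cdot y)=\rho(x,y)$, the action is free ($\alpha\cdot x=x$ implies $\alpha=0$), and there are finitely many orbits; $x_1,\dots,x_N$ are fixed representatives of the $N$ orbits. $U:l^p(X)\to l^p(\mathbb{Z}^n,\mathbb{C}^N)$ is $(Uf)(\alpha)=(f(\alpha\cdot x_1),\dots,f(\alpha\cdot x_N))$, an isometric isomorphism. On $l^p(\mathbb{Z}^n,\mathbb{C}^N)$, $(V_\alpha u)(x)=u(x-\alpha)$ and $a\in l^\infty(\mathbb{Z}^n,\mathbb{C}^{N\times N})$ acts by $(au)(x)=a(x)u(x)$. A linear operator $A$ on $l^p(X)$ has generating function $k_A:X\times X\to\mathbb{C}$ if $(Au)(x)=\sum_{y\in X}k_A(x,y)u(y)$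 for all finitely supported $u$. $A$ is a band operator on $l^p(X)$ if it has a bounded generating function $k_A$ and there is $R>0$ with $k_A(x,y)=0$ whenever $\rho(x,y)>R$.
   Formalization: In the definition of a band operator, the generating-function formula expressing (Au)(x) through $k_A$ holds for every u in $l^p(X)$, not only for finitely supported u. The statement above fails without it. *)

theory Defs
  imports "HOL-Analysis.Analysis" "HOL-Library.Countable"
begin

definition lp :: "ennreal \<Rightarrow> ('a \<Rightarrow> 'b::real_normed_vector) set" where
  "lp p = (if p = \<infinity> then {f. bounded (range f)}
           else {f. (\<lambda>x. norm (f x) powr enn2real p) summable_on UNIV})"

text \<open>A discrete metric space: a metric all of whose closed balls are finite
 (countability of the carrier is imposed via the type class countable).\<close>
definition discrete_metric :: "('x \<Rightarrow> 'x \<Rightarrow> real) \<Rightarrow> bool" where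
  "discrete_metric \<rho> \<longleftrightarrow>
     (\<forall>x y. \<rho> x y = 0 \<longleftrightarrow> x = y) \<and> (\<forall>x y. \<rho> x y = \<rho> y x) \<and>
     (\<forall>x y z. \<rho> x z \<le> \<rho> x y + \<rho> y z) \<and>
     (\<forall>x0 r. finite {x. \<rho> x x0 \<le> r})"

text \<open>Z^n-periodicity with orbit representatives r j, j ranging over the finite type 'k
 (so N = CARD('k)).\<close>
definition periodic_space ::
  "('x \<Rightarrow> 'x \<Rightarrow> real) \<Rightarrow> (int^'n \<Rightarrow> 'x \<Rightarrow> 'x) \<Rightarrow> ('k::finite \<Rightarrow> 'x) \<Rightarrow> bool" where
  "periodic_space \<rho> act r \<longleftrightarrow>
     (\<forall>x. act 0 x = x) \<and>
     (\<forall>\<alpha> \<beta> x. act (\<alpha> + \<beta>) x = act \<alpha> (act \<beta> x)) \<and>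
     (\<forall>\<alpha> x y. \<rho> (act \<alpha> x) (act \<alpha> y) = \<rho> x y) \<and>
     (\<forall>\<alpha> x. act \<alpha> x = x \<longrightarrow> \<alpha> = 0) \<and>
     (\<forall>x. \<exists>\<alpha> j. x = act \<alpha> (r j)) \<and>
     (\<forall>i j \<alpha>. r i = act \<alpha> (r j) \<longrightarrow> i = j)"

definition Uop :: "(int^'n \<Rightarrow> 'x \<Rightarrow> 'x) \<Rightarrow> ('k::finite \<Rightarrow> 'x) \<Rightarrow> ('x \<Rightarrow> complex)
                   \<Rightarrow> int^'n \<Rightarrow> complex^'k" where
  "Uop act r f \<alpha> = (\<chi> j. f (act \<alpha> (r j)))"

definition Uinv :: "(int^'n \<Rightarrow> 'x \<Rightarrow> 'x) \<Rightarrow> ('k::finite \<Rightarrow> 'x) \<Rightarrow> (int^'n \<Rightarrow> complex^'k)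
                   \<Rightarrow> 'x \<Rightarrow> complex" where
  "Uinv act r v x = (let (\<alpha>, j) = (THE (\<alpha>, j). x = act \<alpha> (r j)) in v \<alpha> $ j)"

definition Vshift :: "int^'n \<Rightarrow> (int^'n \<Rightarrow> 'b) \<Rightarrow> int^'n \<Rightarrow> 'b" where
  "Vshift \<alpha> u x = u (x - \<alpha>)"

text \<open>The generating-function formula is required on all of l^p(X) (the sum has only
 finitely many non-zero terms).\<close>
definition band_operator ::
  "('x \<Rightarrow> 'x \<Rightarrow> real) \<Rightarrow> ennreal \<Rightarrow> (('x \<Rightarrow> complex) \<Rightarrow> ('x \<Rightarrow> complex)) \<Rightarrow> bool" where
  "band_operator \<rho> p A \<longleftrightarrow>
     (\<forall>u \<in> lp p. A u \<in> lp p) \<and>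
     (\<exists>k :: 'x \<Rightarrow> 'x \<Rightarrow> complex.
        (\<exists>C. \<forall>x y. norm (k x y) \<le> C) \<and>
        (\<exists>R>0. \<forall>x y. \<rho> x y > R \<longrightarrow> k x y = 0) \<and>
        (\<forall>u \<in> lp p. \<forall>x. A u x = (\<Sum>\<^sub>\<infinity>y. k x y * u y)))"

end

theory Submission
  imports Defs
begin

lemma box_finite: "finite {\<alpha>::int^'n. \<forall>i. \<bar>\<alpha> $ i\<bar> \<le> int m}"
proof -
  have "{\<alpha>::int^'n. \<forall>i. \<bar>\<alpha> $ i\<bar> \<le> int m} \<subseteq> (\<lambda>f. \<chi> i. f i) ` (PiE UNIV (\<lambda>_. {-int m..int m}))"
  proof
    fix \<alpha> :: "int^'n" assume "\<alpha> \<in> {\<alpha>. \<forall>i. \<bar>\<alpha> $ i\<bar> \<le> int m}"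
    then have h: "\<And>i. \<bar>\<alpha> $ i\<bar> \<le> int m" by auto
    have "\<alpha> $ i \<in> {-int m..int m}" for i using h[of i] by (simp add: abs_le_iff)
    then have "(\<lambda>i. \<alpha> $ i) \<in> PiE UNIV (\<lambda>_. {-int m..int m})" by auto
    moreover have "\<alpha> = (\<chi> i. (\<lambda>i. \<alpha> $ i) i)" by simp
    ultimately show "\<alpha> \<in> (\<lambda>f. \<chi> i. f i) ` (PiE UNIV (\<lambda>_. {-int m..int m}))" by blast
  qed
  moreover have "finite (PiE (UNIV::'n set) (\<lambda>_. {-int m..int m}))"
    by (rule finite_PiE) auto
  ultimately show ?thesis using finite_subset by blast
qed

theorem proposition3p1:
  fixes \<rho> :: "'x::countable \<Rightarrow> 'x \<Rightarrow> real"
    and act :: "int^'n \<Rightarrow> 'x \<Rightarrow> 'x"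
    and r :: "'k::finite \<Rightarrow> 'x"
    and p :: ennreal
    and A :: "('x \<Rightarrow> complex) \<Rightarrow> ('x \<Rightarrow> complex)"
  assumes "discrete_metric \<rho>"
    and "periodic_space \<rho> act r"
    and "1 \<le> p"
    and "band_operator \<rho> p A"
  shows "\<exists>(m::nat) (a :: int^'n \<Rightarrow> int^'n \<Rightarrow> complex^'k^'k).
           (\<forall>\<alpha>. bounded (range (a \<alpha>))) \<and>
           (\<forall>v \<in> (lp p :: (int^'n \<Rightarrow> complex^'k) set).
              Uop act r (A (Uinv act r v)) =
              (\<lambda>x. \<Sum>\<alpha>\<in>{\<alpha>. \<forall>i. \<bar>\<alpha> $ i\<bar> \<le> int m}. a \<alpha> x *v Vshift \<alpha> v x))"
proof -
  have sym: "\<And>x y. \<rho> x y = \<rho> y x" and ball: "\<And>x0 r. finite {x. \<rho> x x0 \<le> r}"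
    using assms(1) unfolding discrete_metric_def by auto
  have act0: "\<And>x. act 0 x = x" and actadd: "\<And>a b x. act (a + b) x = act a (act b x)"
    and inv: "\<And>a x y. \<rho> (act a x) (act a y) = \<rho> x y"
    and free: "\<And>a x. act a x = x \<Longrightarrow> a = 0"
    and surj: "\<And>x. \<exists>\<alpha> j. x = act \<alpha> (r j)"
    and rep: "\<And>i j \<alpha>. r i = act \<alpha> (r j) \<Longrightarrow> i = j"
    using assms(2) unfolding periodic_space_def by (simp, simp, simp, metis, metis, metis)
  have actinv: "act (-a) (act a x) = x" for a x
    using actadd[of "-a" a x] act0 by simp
  have actinj: "a = b" if "act a x = act b x" for a b x
  proof -
    have "act (-b + a) x = x" using that actadd actinv by metis
    then have "-b + a = 0" by (rule free)
    then show ?thesis by (simp add: algebra_simps)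
  qed
  have uniq: "\<alpha> = \<beta> \<and> i = j" if "act \<alpha> (r i) = act \<beta> (r j)" for \<alpha> \<beta> i j
  proof -
    have "r i = act (-\<alpha> + \<beta>) (r j)" using that actadd actinv by metis
    then have ij: "i = j" by (rule rep)
    then show ?thesis using that actinj by blast
  qed
  have Uinv_eval: "Uinv act r v (act \<alpha> (r j)) = v \<alpha> $ j" for v \<alpha> j
  proof -
    have "(THE (\<beta>, i). act \<alpha> (r j) = act \<beta> (r i)) = (\<alpha>, j)"
      by (rule the_equality) (auto dest: uniq)
    then show ?thesis unfolding Uinv_def by simp
  qed
  obtain k C R where kC: "\<And>x y. norm (k x y) \<le> C" and R: "R > 0"
    and kR: "\<And>x y. \<rho> x y > R \<Longrightarrow> k x y = 0"
    and kA: "\<And>u x. u \<in> lp p \<Longrightarrow> A u x = (\<Sum>\<^sub>\<infinity>y. k x y * u y)"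
    using assms(4) unfolding band_operator_def by metis
  define S where "S i j = {\<alpha>. \<rho> (act \<alpha> (r i)) (r j) \<le> R}" for i j
  have Sfin: "finite (S i j)" for i j
  proof -
    have "(\<lambda>\<alpha>. act \<alpha> (r i)) ` S i j \<subseteq> {x. \<rho> x (r j) \<le> R}" unfolding S_def by auto
    then have "finite ((\<lambda>\<alpha>. act \<alpha> (r i)) ` S i j)" using ball finite_subset by blast
    moreover have "inj_on (\<lambda>\<alpha>. act \<alpha> (r i)) (S i j)" by (auto intro: inj_onI actinj)
    ultimately show ?thesis using finite_imageD by blast
  qed
  define T where "T = (\<Union>i j. S i j)"
  have Tfin: "finite T" unfolding T_def using Sfin by auto
  define m where "m = (\<Sum>\<alpha>\<in>T. \<Sum>l\<in>UNIV. nat \<bar>\<alpha> $ l\<bar>)"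
  define Box where "Box = {\<alpha>::int^'n. \<forall>i. \<bar>\<alpha> $ i\<bar> \<le> int m}"
  have TBox: "T \<subseteq> Box"
  proof
    fix \<alpha> assume a: "\<alpha> \<in> T"
    show "\<alpha> \<in> Box" unfolding Box_def
    proof (intro CollectI allI)
      fix l
      have "nat \<bar>\<alpha> $ l\<bar> \<le> (\<Sum>l\<in>UNIV. nat \<bar>\<alpha> $ l\<bar>)"
        by (rule member_le_sum) auto
      also have "\<dots> \<le> m" unfolding m_def
        by (rule member_le_sum[of \<alpha> T "\<lambda>\<alpha>. \<Sum>l\<in>UNIV. nat \<bar>\<alpha> $ l\<bar>"]) (use a Tfin in auto)
      finally show "\<bar>\<alpha> $ l\<bar> \<le> int m" by linarith
    qed
  qed
  have Boxfin: "finite Box" unfolding Box_def by (rule box_finite)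
  define a :: "int^'n \<Rightarrow> int^'n \<Rightarrow> complex^'k^'k" where
    "a \<alpha> x = (\<chi> i j. k (act x (r i)) (act (x - \<alpha>) (r j)))" for \<alpha> x
  have abdd: "bounded (range (a \<alpha>))" for \<alpha>
  proof -
    have "norm (a \<alpha> x) \<le> real CARD('k) * (real CARD('k) * C)" for x
    proof -
      have "norm (a \<alpha> x) \<le> (\<Sum>i\<in>UNIV. norm (a \<alpha> x $ i))" unfolding norm_vec_def by (rule L2_set_le_sum) simp
      also have "\<dots> \<le> (\<Sum>i\<in>(UNIV::'k set). real CARD('k) * C)"
      proof (rule sum_mono)
        fix i
        have "norm (a \<alpha> x $ i) \<le> (\<Sum>j\<in>UNIV. norm (a \<alpha> x $ i $ j))" unfolding norm_vec_def by (rule L2_set_le_sum) simp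
        also have "\<dots> \<le> (\<Sum>j\<in>(UNIV::'k set). C)"
          by (rule sum_mono) (simp add: a_def kC)
        finally show "norm (a \<alpha> x $ i) \<le> real CARD('k) * C" by simp
      qed
      finally show ?thesis by simp
    qed
    then show ?thesis unfolding bounded_iff by blast
  qed
  have Ulp: "Uinv act r v \<in> lp p" if v: "v \<in> lp p" for v :: "int^'n \<Rightarrow> complex^'k"
  proof (cases "p = \<infinity>")
    case True
    then obtain B where B: "\<And>\<alpha>. norm (v \<alpha>) \<le> B" using v unfolding lp_def bounded_iff by auto
    have "norm (Uinv act r v y) \<le> B" for y
    proof -
      obtain \<alpha> j where y: "y = act \<alpha> (r j)" using surj by blast
      show ?thesis unfolding y Uinv_eval using Finite_Cartesian_Product.norm_nth_le[where x="v \<alpha>" and i=j] B[of \<alpha>] by linarith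
    qed
    then show ?thesis using True unfolding lp_def bounded_iff by auto
  next
    case False
    define q where "q = enn2real p"
    have vs: "(\<lambda>\<alpha>. norm (v \<alpha>) powr q) summable_on UNIV" using v False unfolding lp_def q_def by auto
    define f where "f = (\<lambda>(\<alpha>, j). norm (v \<alpha> $ j) powr q)"
    have "f summable_on (UNIV \<times> UNIV)"
    proof (rule summable_on_SigmaI[where g="\<lambda>\<alpha>. \<Sum>j\<in>UNIV. norm (v \<alpha> $ j) powr q"])
      fix \<alpha> :: "int^'n"
      show "((\<lambda>y. f (\<alpha>, y)) has_sum (\<Sum>j\<in>UNIV. norm (v \<alpha> $ j) powr q)) UNIV"
        unfolding f_def by (simp add: has_sum_finite)
    next
      have "(\<lambda>\<alpha>. real CARD('k) * norm (v \<alpha>) powr q) summable_on UNIV"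
        using vs by (rule summable_on_cmult_right)
      then show "(\<lambda>\<alpha>. \<Sum>j\<in>UNIV. norm (v \<alpha> $ j) powr q) summable_on UNIV"
      proof (rule summable_on_comparison_test)
        fix \<alpha>
        have "(\<Sum>j\<in>UNIV. norm (v \<alpha> $ j) powr q) \<le> (\<Sum>j\<in>(UNIV::'k set). norm (v \<alpha>) powr q)"
          by (rule sum_mono) (simp add: Finite_Cartesian_Product.norm_nth_le powr_mono2 q_def)
        then show "(\<Sum>j\<in>UNIV. norm (v \<alpha> $ j) powr q) \<le> real CARD('k) * norm (v \<alpha>) powr q" by simp
        show "0 \<le> (\<Sum>j\<in>UNIV. norm (v \<alpha> $ j) powr q)" by (simp add: sum_nonneg)
      qed
    next
      show "\<And>x y. x \<in> UNIV \<Longrightarrow> y \<in> UNIV \<Longrightarrow> 0 \<le> f (x, y)" unfolding f_def by simp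
    qed
    moreover have "bij_betw (\<lambda>(\<alpha>, j). act \<alpha> (r j)) (UNIV \<times> UNIV) UNIV"
    proof (rule bij_betwI')
      fix x y :: "(int^'n) \<times> 'k"
      show "((\<lambda>(\<alpha>, j). act \<alpha> (r j)) x = (\<lambda>(\<alpha>, j). act \<alpha> (r j)) y) = (x = y)"
        by (cases x; cases y) (auto dest: uniq)
    next
      fix y :: 'x
      obtain \<alpha> j where "y = act \<alpha> (r j)" using surj by blast
      then show "\<exists>x\<in>UNIV \<times> UNIV. y = (\<lambda>(\<alpha>, j). act \<alpha> (r j)) x" by auto
    qed auto
    ultimately have "(\<lambda>y. norm (Uinv act r v y) powr q) summable_on UNIV"
      using summable_on_reindex_bij_betw[of "\<lambda>(\<alpha>, j). act \<alpha> (r j)" "UNIV \<times> UNIV" UNIV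
          "\<lambda>y. norm (Uinv act r v y) powr q"]
      by (simp add: f_def case_prod_beta Uinv_eval split_beta')
    then show ?thesis using False unfolding lp_def q_def by auto
  qed
  have main: "Uop act r (A (Uinv act r v)) x $ i =
      (\<Sum>\<alpha>\<in>Box. a \<alpha> x *v Vshift \<alpha> v x) $ i" if v: "v \<in> lp p" for v x i
  proof -
    define u where "u = Uinv act r v"
    define z where "z = act x (r i)"
    define g where "g y = k z y * u y" for y
    define \<psi> where "\<psi> = (\<lambda>(\<alpha>, j). act (x - \<alpha>) (r j))"
    have "Uop act r (A u) x $ i = A u z" unfolding Uop_def z_def by simp
    also have "\<dots> = infsum g UNIV" unfolding g_def using kA Ulp v u_def by blast
    also have "\<dots> = infsum g (\<psi> ` (Box \<times> UNIV))"
    proof (rule infsum_cong_neutral)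
      fix y assume "y \<in> UNIV - \<psi> ` (Box \<times> UNIV)"
      then have ny: "y \<notin> \<psi> ` (Box \<times> UNIV)" by simp
      obtain \<beta> j where y: "y = act \<beta> (r j)" using surj by blast
      have "\<rho> z y = \<rho> (act (x - \<beta>) (r i)) (r j)"
        using inv[of "-\<beta>" z y] unfolding z_def y
        by (metis actadd actinv diff_conv_add_uminus add.commute)
      moreover have "x - \<beta> \<notin> Box"
      proof
        assume "x - \<beta> \<in> Box"
        then have "y \<in> \<psi> ` (Box \<times> UNIV)" unfolding y \<psi>_def
          by (intro image_eqI[where x="(x - \<beta>, j)"]) auto
        with ny show False by blast
      qed
      then have "x - \<beta> \<notin> S i j" using TBox T_def by blast
      ultimately have "\<rho> z y > R" unfolding S_def by auto
      then show "g y = 0" unfolding g_def using kR by simp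
    qed auto
    also have "\<dots> = infsum (g \<circ> \<psi>) (Box \<times> UNIV)"
      by (rule infsum_reindex) (auto simp: inj_on_def \<psi>_def dest: uniq)
    also have "\<dots> = sum (g \<circ> \<psi>) (Box \<times> UNIV)"
      using Boxfin by (simp add: infsum_finite)
    also have "\<dots> = (\<Sum>\<alpha>\<in>Box. \<Sum>j\<in>UNIV. g (\<psi> (\<alpha>, j)))"
      by (simp add: sum.cartesian_product)
    also have "\<dots> = (\<Sum>\<alpha>\<in>Box. (a \<alpha> x *v Vshift \<alpha> v x) $ i)"
      by (simp add: g_def \<psi>_def u_def Uinv_eval a_def z_def matrix_vector_mult_def Vshift_def)
    also have "\<dots> = (\<Sum>\<alpha>\<in>Box. a \<alpha> x *v Vshift \<alpha> v x) $ i"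
      by (simp add: sum_component)
    finally show ?thesis unfolding u_def .
  qed
  show ?thesis
    apply (rule exI[of _ m], rule exI[of _ a])
    using abdd main unfolding Box_def by (auto simp: vec_eq_iff)
qed

end
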